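(* Let $\omega\ge1$ and $\Lambda\ge2\omega-1$ be integers, $P,\sigma^2>0$, $\textsf{snr}=P/\sigma^2$, $\kappa=\frac{\Lambda+\omega-1}{\Lambda}$, and $0<R<\frac{1}{2\kappa}\ln(1+\kappa\,\textsf{snr})$. Consider the asymptotic state evolution in the context. Then: (1) If $\omega>\big(\frac{1}{e^{2R\kappa}-1}-\frac{1}{\kappa\,\textsf{snr}}\big)^{-1}$, then $\bar\psi^1_1=\bar\psi^1_\Lambda=0$. (2) Let $X=\omega\cdot\frac{1+\kappa\,\textsf{snr}}{(\kappa\,\textsf{snr})^2}\big[\ln(1+\kappa\,\textsf{snr})-2R\kappa\big]$. For every integer $c$ with $1\le c\le\omega-1$ and $c<X$, $\bar\psi^1_c=\bar\psi^1_{\Lambda+1-c}=0$. (3) If for some integer $c_0$ with $1\le c_0\le\omega-1$ one has $\bar\psi^1_c=0$ for all $c\le c_0$ and all $c\ge\Lambda+1-c_0$, then for every $t\ge1$, $\bar\psi^t_c=0$ for all $c\in[\Lambda]$ with $\min(c,\Lambda+1-c)\le tc_0$; in particular $\bar\psi^t_c=0$ for all $c\in[\Lambda]$ once $t\ge\lceil\Lambda/(2c_0)\rceil$.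
   Context: Asymptotic state evolution for an $(\omega,\Lambda)$ base matrix (rates in nats): initialize $\bar\psi^0_c=1$ for $c\in[\Lambda]$; for $t=0,1,2,\dots$, $$\bar\phi^t_r=\sigma^2\Big(1+\frac{\kappa\,\textsf{snr}}{\omega}\sum_{c=\underline c_r}^{\overline c_r}\bar\psi^t_c\Big),\quad r\in[\Lambda+\omega-1],$$ $$\bar\psi^{t+1}_c=1-\mathbf 1\Big\{\frac{P}{\omega}\sum_{r=c}^{c+\omega-1}\frac{1}{\bar\phi^t_r}>2R\Big\},\quad c\in[\Lambda],$$ where $\underline c_r=\max\{1,r-\omega+1\}$ and $\overline c_r=\min\{r,\Lambda\}$. (This corresponds to the base matrix with $L_R=\Lambda+\omega-1$ rows, $L_C=\Lambda$ columns, $W_{rc}=P\frac{\Lambda+\omega-1}{\omega}$ if $c\le r\le c+\omega-1$ and $0$ otherwise; $\bar\psi^t_c=0$ means column block $c$ is decoded at iteration $t$.) *)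

theory Defs
  imports Complex_Main
begin

text \<open>Parameters: om = omega, La = Lambda, P, s2 = sigma^2, R (rate in nats).
  snr = P / s2,  kappa = (La + om - 1) / La.
  Column index c ranges over {1..La}, row index r over {1..La+om-1}.\<close>

definition se_snr :: "real \<Rightarrow> real \<Rightarrow> real" where
  "se_snr P s2 = P / s2"

definition se_kappa :: "nat \<Rightarrow> nat \<Rightarrow> real" where
  "se_kappa om La = (real La + real om - 1) / real La"

text \<open>The lower summation bound max 1 (r - om + 1) is written max 1 (r + 1 - om),
  which is the same thing with truncated natural subtraction.\<close>
definition se_phi :: "nat \<Rightarrow> nat \<Rightarrow> real \<Rightarrow> real \<Rightarrow> (nat \<Rightarrow> real) \<Rightarrow> nat \<Rightarrow> real" where
  "se_phi om La P s2 psi r =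
     s2 * (1 + se_kappa om La * se_snr P s2 / real om *
              (\<Sum>c = max 1 (r + 1 - om) .. min r La. psi c))"

primrec se_psi :: "nat \<Rightarrow> nat \<Rightarrow> real \<Rightarrow> real \<Rightarrow> real \<Rightarrow> nat \<Rightarrow> nat \<Rightarrow> real" where
  "se_psi om La P s2 R 0 = (\<lambda>c. 1)"
| "se_psi om La P s2 R (Suc t) =
     (\<lambda>c. 1 - (if P / real om * (\<Sum>r = c .. c + om - 1. 1 / se_phi om La P s2 (se_psi om La P s2 R t) r) > 2 * R
               then 1 else 0))"

end

theory Submission
  imports Defs
begin


definition rowsum :: "nat \<Rightarrow> nat \<Rightarrow> (nat \<Rightarrow> real) \<Rightarrow> nat \<Rightarrow> real" where
  "rowsum om La psi r = (\<Sum>c = max 1 (r + 1 - om) .. min r La. psi c)"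

lemma psi_01: "se_psi om La P s2 R t c = 0 \<or> se_psi om La P s2 R t c = 1"
  by (cases t) auto

lemma psi_ge0: "se_psi om La P s2 R t c \<ge> 0" using psi_01[of om La P s2 R t c] by auto
lemma psi_le1: "se_psi om La P s2 R t c \<le> 1" using psi_01[of om La P s2 R t c] by auto

lemma sum_shift: "(om::nat) \<ge> 1 \<Longrightarrow> (\<Sum>r = c .. c + om - 1. f r) = (\<Sum>j<om. f (c + j))"
proof -
  assume "om \<ge> 1"
  have "{c .. c + om - 1} = (\<lambda>j. c + j) ` {..<om}"
  proof (rule set_eqI, rule iffI)
    fix x assume "x \<in> {c .. c + om - 1}"
    hence "c \<le> x" "x \<le> c + om - 1" by auto
    hence "x = c + (x - c)" by simp
    moreover have "x - c < om" using \<open>x \<le> c + om - 1\<close> \<open>om \<ge> 1\<close> by arith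
    ultimately
    show "x \<in> (\<lambda>j. c + j) ` {..<om}" by blast
  qed (use \<open>om \<ge> 1\<close> in auto)
  thus ?thesis by (simp add: sum.reindex)
qed

lemma rowsum0: "rowsum om La (se_psi om La P s2 R 0) r = real (min r La + 1 - max 1 (r + 1 - om))"
  by (simp add: rowsum_def)

lemma rowsum_left:
  assumes "\<And>col. col \<in> {1..La} \<Longrightarrow> col \<le> S \<Longrightarrow> psi col = 0"
    and "\<And>col. 0 \<le> psi col" "\<And>col. psi col \<le> 1"
  shows "rowsum om La psi r \<le> real (min r La + 1 - max (S+1) (r + 1 - om))"
proof -
  let ?I = "{max 1 (r + 1 - om) .. min r La}"
  have "rowsum om La psi r = (\<Sum>col\<in>?I. if S < col then psi col else 0)"
    unfolding rowsum_def by (rule sum.cong) (auto intro: assms(1))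
  also have "\<dots> \<le> (\<Sum>col\<in>?I. if S < col then 1 else 0)"
    by (rule sum_mono) (auto intro: assms)
  also have "?I \<inter> Collect ((<) S) = {max (S+1) (r + 1 - om) .. min r La}" by auto
  hence "(\<Sum>col\<in>?I. if S < col then 1 else 0) = real (min r La + 1 - max (S+1) (r + 1 - om))"
    by (simp add: sum.If_cases)
  finally show ?thesis .
qed

lemma rowsum_right:
  assumes "\<And>col. col \<in> {1..La} \<Longrightarrow> col > La - S \<Longrightarrow> psi col = 0"
    and "\<And>col. 0 \<le> psi col" "\<And>col. psi col \<le> 1"
  shows "rowsum om La psi r \<le> real (min r (La - S) + 1 - max 1 (r + 1 - om))"
proof -
  let ?I = "{max 1 (r + 1 - om) .. min r La}"
  have "rowsum om La psi r = (\<Sum>col\<in>?I. if col \<le> La - S then psi col else 0)"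
    unfolding rowsum_def by (rule sum.cong) (auto intro: assms(1))
  also have "\<dots> \<le> (\<Sum>col\<in>?I. if col \<le> La - S then 1 else 0)"
    by (rule sum_mono) (auto intro: assms)
  also have "?I \<inter> {x. x \<le> La - S} = {max 1 (r + 1 - om) .. min r (La - S)}" by auto
  hence "(\<Sum>col\<in>?I. if col \<le> La - S then 1 else 0) = real (min r (La - S) + 1 - max 1 (r + 1 - om))"
    by (simp add: sum.If_cases)
  finally show ?thesis .
qed

lemma dom:
  assumes om: "om \<ge> 1" and La: "La \<ge> 1" and P: "P > 0" and s2: "s2 > 0"
    and le: "\<And>j. j < om \<Longrightarrow> rowsum om La (se_psi om La P s2 R t) (c + j) \<le> rowsum om La (se_psi om La P s2 R s) (c' + j)"
    and dec: "se_psi om La P s2 R (Suc s) c' = 0"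
  shows "se_psi om La P s2 R (Suc t) c = 0"
proof -
  define K where "K = se_kappa om La * se_snr P s2 / real om"
  have K: "K \<ge> 0" unfolding K_def se_kappa_def se_snr_def using om La P s2 by simp
  have phi: "se_phi om La P s2 psi r = s2 * (1 + K * rowsum om La psi r)" for psi r
    unfolding se_phi_def K_def rowsum_def by simp
  have rs0: "rowsum om La (se_psi om La P s2 R tt) r \<ge> 0" for tt r
    unfolding rowsum_def by (rule sum_nonneg) (simp add: psi_ge0)
  have "1 / se_phi om La P s2 (se_psi om La P s2 R s) (c' + j) \<le> 1 / se_phi om La P s2 (se_psi om La P s2 R t) (c + j)"
    if "j < om" for j
  proof -
    have a: "0 < s2 * (1 + K * rowsum om La (se_psi om La P s2 R t) (c + j))"
      using s2 K rs0 by (simp add: add_pos_nonneg)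
    have "s2 * (1 + K * rowsum om La (se_psi om La P s2 R t) (c + j)) \<le> s2 * (1 + K * rowsum om La (se_psi om La P s2 R s) (c' + j))"
      using le[OF that] K s2 by (simp add: mult_left_mono)
    thus ?thesis unfolding phi using a by (simp add: frac_le)
  qed
  hence "(\<Sum>j<om. 1 / se_phi om La P s2 (se_psi om La P s2 R s) (c' + j)) \<le> (\<Sum>j<om. 1 / se_phi om La P s2 (se_psi om La P s2 R t) (c + j))"
    by (intro sum_mono) auto
  hence "P / real om * (\<Sum>j<om. 1 / se_phi om La P s2 (se_psi om La P s2 R s) (c' + j)) \<le> P / real om * (\<Sum>j<om. 1 / se_phi om La P s2 (se_psi om La P s2 R t) (c + j))"
    using P om by (intro mult_left_mono) auto
  moreover have "P / real om * (\<Sum>j<om. 1 / se_phi om La P s2 (se_psi om La P s2 R s) (c' + j)) > 2 * R"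
    using dec sum_shift[OF om, where c=c' and f="\<lambda>r. 1 / se_phi om La P s2 (se_psi om La P s2 R s) r"] by (simp split: if_splits)
  ultimately show ?thesis using sum_shift[OF om, where c=c and f="\<lambda>r. 1 / se_phi om La P s2 (se_psi om La P s2 R t) r"] by simp
qed

lemma arith_left:
  fixes c' S j om La :: nat
  shows "min (c' + S + j) La + 1 - max (S+1) (c' + S + j + 1 - om) \<le> min (c' + j) La + 1 - max 1 (c' + j + 1 - om)"
  by (simp add: min_def max_def) arith

lemma arith_right:
  fixes c S j om La :: nat
  shows "min (c + j) (La - S) + 1 - max 1 (c + j + 1 - om) \<le> min (c + S + j) La + 1 - max 1 (c + S + j + 1 - om)"
  by (simp add: min_def max_def) arith

lemma part3_step:
  assumes om: "om \<ge> 1" and La: "La \<ge> 1" and P: "P > 0" and s2: "s2 > 0" and c0: "c0 \<ge> 1"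
    and hyp: "\<forall>c\<in>{1..La}. (c \<le> c0 \<or> c \<ge> La + 1 - c0) \<longrightarrow> se_psi om La P s2 R 1 c = 0"
    and IH: "\<forall>c\<in>{1..La}. min c (La + 1 - c) \<le> t * c0 \<longrightarrow> se_psi om La P s2 R t c = 0"
    and c: "c \<in> {1..La}" and cm: "min c (La + 1 - c) \<le> Suc t * c0"
  shows "se_psi om La P s2 R (Suc t) c = 0"
proof -
  define T where "T = t * c0"
  have cm': "min c (La + 1 - c) \<le> T + c0" using cm by (simp add: T_def)
  have IH': "\<And>col. col \<in> {1..La} \<Longrightarrow> min col (La + 1 - col) \<le> T \<Longrightarrow> se_psi om La P s2 R t col = 0"
    using IH T_def by auto
  show ?thesis
  proof (cases "c \<le> T + c0")
    case True
    define S where "S = min (c - 1) T"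
    define c' where "c' = c - S"
    have cc': "c = c' + S" using c by (simp add: c'_def S_def)
    have c'1: "c' \<in> {1..La}" "c' \<le> c0" using c True c0 by (auto simp: c'_def S_def)
    have dec: "se_psi om La P s2 R (Suc 0) c' = 0" using hyp c'1 by auto
    show ?thesis
    proof (rule dom[OF om La P s2 _ dec])
      fix j assume "j < om"
      have "rowsum om La (se_psi om La P s2 R t) (c + j) \<le> real (min (c + j) La + 1 - max (S+1) (c + j + 1 - om))"
        by (rule rowsum_left) (auto intro!: IH' simp: psi_ge0 psi_le1 S_def)
      also have "\<dots> \<le> real (min (c' + j) La + 1 - max 1 (c' + j + 1 - om))"
        unfolding cc' using arith_left[where c'=c' and S=S and j=j and om=om and La=La] by (simp add: add.assoc add.commute add.left_commute)
      also have "\<dots> = rowsum om La (se_psi om La P s2 R 0) (c' + j)" by (rule rowsum0[symmetric])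
      finally show "rowsum om La (se_psi om La P s2 R t) (c + j) \<le> rowsum om La (se_psi om La P s2 R 0) (c' + j)" .
    qed
  next
    case False
    hence F: "La + 1 - c \<le> T + c0" using cm' by simp
    define S where "S = min (La - c) T"
    define c' where "c' = c + S"
    have c'1: "c' \<in> {1..La}" "c' \<ge> La + 1 - c0" using c F c0 by (auto simp: c'_def S_def)
    have dec: "se_psi om La P s2 R (Suc 0) c' = 0" using hyp c'1 by auto
    show ?thesis
    proof (rule dom[OF om La P s2 _ dec])
      fix j assume "j < om"
      have "rowsum om La (se_psi om La P s2 R t) (c + j) \<le> real (min (c + j) (La - S) + 1 - max 1 (c + j + 1 - om))"
        by (rule rowsum_right) (auto intro!: IH' simp: psi_ge0 psi_le1 S_def)
      also have "\<dots> \<le> real (min (c' + j) La + 1 - max 1 (c' + j + 1 - om))"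
        unfolding c'_def using arith_right[where c=c and S=S and j=j and om=om and La=La] by (simp add: add.assoc add.commute add.left_commute)
      also have "\<dots> = rowsum om La (se_psi om La P s2 R 0) (c' + j)" by (rule rowsum0[symmetric])
      finally show "rowsum om La (se_psi om La P s2 R t) (c + j) \<le> rowsum om La (se_psi om La P s2 R 0) (c' + j)" .
    qed
  qed
qed

lemma part3:
  assumes om: "om \<ge> 1" and La: "La \<ge> 1" and P: "P > 0" and s2: "s2 > 0" and c0: "c0 \<ge> 1"
    and hyp: "\<forall>c\<in>{1..La}. (c \<le> c0 \<or> c \<ge> La + 1 - c0) \<longrightarrow> se_psi om La P s2 R 1 c = 0"
  shows "\<forall>c\<in>{1..La}. min c (La + 1 - c) \<le> Suc n * c0 \<longrightarrow> se_psi om La P s2 R (Suc n) c = 0"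
proof (induction n)
  case 0
  show ?case using hyp by auto
next
  case (Suc n)
  show ?case using part3_step[OF om La P s2 c0 hyp Suc] by blast
qed



lemma nn_left:
  fixes c j om La :: nat
  assumes "1 \<le> c" "c \<le> om" "j < om" "La \<ge> 2 * om - 1"
  shows "min (c + j) La + 1 - max 1 (c + j + 1 - om) = min (c + j) om"
  using assms by (simp add: min_def max_def) arith

lemma nn_right:
  fixes c j om La :: nat
  assumes "1 \<le> c" "c \<le> om" "j < om" "La \<ge> 2 * om - 1"
  shows "min (La + 1 - c + j) La + 1 - max 1 (La + 1 - c + j + 1 - om) = min (c + (om - Suc j)) om"
  using assms by (simp add: min_def max_def) arith

lemma psi1_iff:
  assumes "om \<ge> 1"
  shows "se_psi om La P s2 R (Suc 0) c = 0 \<longleftrightarrow>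
     P / real om * (\<Sum>j<om. 1 / (s2 * (1 + se_kappa om La * se_snr P s2 / real om *
        real (min (c + j) La + 1 - max 1 (c + j + 1 - om))))) > 2 * R"
  using sum_shift[OF assms, where c=c and f="\<lambda>r. 1 / se_phi om La P s2 (\<lambda>c. 1) r"]
  by (simp add: se_phi_def)



lemma key_ln:
  fixes a w m :: real
  assumes "a > 0" "w > 0" "m \<ge> 0"
  shows "ln (1 + a * (m + 1) / w) - ln (1 + a * m / w) \<le> a / w * (1 / (1 + a * m / w))"
proof -
  have eq: "1 + a * (m + 1) / w = (1 + a * m / w) + a / w" by (simp add: distrib_left add_divide_distrib)
  have p1: "1 + a * m / w > 0" using assms by (simp add: add_pos_nonneg)
  have p2: "1 + a * (m + 1) / w > 0" using assms by (simp add: add_pos_nonneg)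
  have "ln (1 + a * (m + 1) / w) - ln (1 + a * m / w) = ln ((1 + a * (m + 1) / w) / (1 + a * m / w))"
    using p1 p2 by (simp add: ln_div)
  also have "\<dots> \<le> (1 + a * (m + 1) / w) / (1 + a * m / w) - 1"
    using p1 p2 by (intro ln_le_minus_one) simp
  also have "\<dots> = a / w * (1 / (1 + a * m / w))"
    using p1 unfolding eq by (simp add: add_divide_distrib)
  finally show ?thesis .
qed

lemma Hbound:
  fixes a :: real and om c :: nat
  assumes a: "a > 0" and om: "om \<ge> 1" and c: "1 \<le> c" "c \<le> om"
  shows "a / om * (\<Sum>j<om. 1 / (1 + a * real (min (c + j) om) / om))
         \<ge> ln (1 + a) - ln (1 + a * c / om) + (a * c / om) / (1 + a)"
proof -
  define n where "n = om - c"
  define L where "L = (\<lambda>m::nat. ln (1 + a * real m / om))"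
  have omn: "om = n + c" using c by (simp add: n_def)
  have split: "(\<Sum>j<om. 1 / (1 + a * real (min (c + j) om) / om))
      = (\<Sum>j<n. 1 / (1 + a * real (c + j) / om)) + (\<Sum>j\<in>{n..<om}. 1 / (1 + a))"
  proof -
    have "(\<Sum>j<om. 1 / (1 + a * real (min (c + j) om) / om))
       = (\<Sum>j\<in>{0..<n}. 1 / (1 + a * real (min (c + j) om) / om)) + (\<Sum>j\<in>{n..<om}. 1 / (1 + a * real (min (c + j) om) / om))"
      unfolding lessThan_atLeast0 by (rule sum.atLeastLessThan_concat[symmetric]) (simp_all add: omn)
    also have "(\<Sum>j\<in>{0..<n}. 1 / (1 + a * real (min (c + j) om) / om)) = (\<Sum>j<n. 1 / (1 + a * real (c + j) / om))"
      by (simp add: lessThan_atLeast0 omn)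
    also have "(\<Sum>j\<in>{n..<om}. 1 / (1 + a * real (min (c + j) om) / om)) = (\<Sum>j\<in>{n..<om}. 1 / (1 + a))"
      using om by (intro sum.cong) (auto simp: omn)
    finally show ?thesis .
  qed
  have tel: "(\<Sum>j<n. L (Suc (c + j)) - L (c + j)) = L (c + n) - L c"
    using sum_lessThan_telescope[of "\<lambda>j. L (c + j)" n] by simp
  have "(\<Sum>j<n. L (Suc (c + j)) - L (c + j)) \<le> (\<Sum>j<n. a / om * (1 / (1 + a * real (c + j) / om)))"
  proof (rule sum_mono)
    fix j assume "j \<in> {..<n}"
    show "L (Suc (c + j)) - L (c + j) \<le> a / om * (1 / (1 + a * real (c + j) / om))"
      using key_ln[of a "real om" "real (c + j)"] a om unfolding L_def by (simp add: add.commute)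
  qed
  hence A: "L om - L c \<le> a / om * (\<Sum>j<n. 1 / (1 + a * real (c + j) / om))"
    using tel by (simp add: sum_distrib_left omn add.commute)
  have B: "a / om * (\<Sum>j\<in>{n..<om}. 1 / (1 + a)) = (a * c / om) / (1 + a)"
    using omn by simp
  have Lom: "L om = ln (1 + a)" using om by (simp add: L_def)
  have Lc: "L c = ln (1 + a * c / om)" by (simp add: L_def)
  have H: "a / om * (\<Sum>j<om. 1 / (1 + a * real (min (c + j) om) / om)) =
     a / om * (\<Sum>j<n. 1 / (1 + a * real (c + j) / om)) + a / om * (\<Sum>j\<in>{n..<om}. 1 / (1 + a))"
    unfolding split distrib_left ..
  show ?thesis
    unfolding H using A B Lom Lc by linarith
qed



lemma decode:
  assumes om: "om \<ge> 1" and La: "La \<ge> 2 * om - 1" and P: "P > 0" and s2: "s2 > 0"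
    and c: "1 \<le> c" "c \<le> om"
    and H: "se_kappa om La * se_snr P s2 / om * (\<Sum>j<om. 1 / (1 + se_kappa om La * se_snr P s2 * real (min (c + j) om) / om))
              > 2 * R * se_kappa om La"
  shows "se_psi om La P s2 R 1 c = 0 \<and> se_psi om La P s2 R 1 (La + 1 - c) = 0"
proof -
  define k where "k = se_kappa om La"
  define a where "a = se_kappa om La * se_snr P s2"
  have La1: "La \<ge> 1" using om La by linarith
  have k: "k > 0" unfolding k_def se_kappa_def using La1 om by simp
  have a: "a = k * (P / s2)" by (simp add: a_def k_def se_snr_def)
  define Hs where "Hs = (\<Sum>j<om. 1 / (1 + a * real (min (c + j) om) / om))"
  have H': "a / om * Hs > 2 * R * k" using H unfolding Hs_def a_def k_def by simp
  have goal: "P / real om * (\<Sum>j<om. 1 / (s2 * (1 + a / real om * real (min (c + j) om))))  > 2 * R"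
  proof -
    have "(\<Sum>j<om. 1 / (s2 * (1 + a / real om * real (min (c + j) om)))) = Hs / s2"
      unfolding Hs_def sum_divide_distrib by (intro sum.cong) auto
    moreover have "P / real om * (Hs / s2) * k = a / om * Hs"
      unfolding a by (simp add: mult.commute mult.left_commute)
    ultimately have e: "P / real om * (\<Sum>j<om. 1 / (s2 * (1 + a / real om * real (min (c + j) om)))) * k = a / om * Hs"
      by simp
    have "2 * R * k < P / real om * (\<Sum>j<om. 1 / (s2 * (1 + a / real om * real (min (c + j) om)))) * k"
      using e H' by (simp only:)
    thus ?thesis using k by (simp only: mult_less_cancel_right_pos)

  qed
  have left: "se_psi om La P s2 R (Suc 0) c = 0"
    unfolding psi1_iff[OF om]
  proof -
    have "(\<Sum>j<om. 1 / (s2 * (1 + se_kappa om La * se_snr P s2 / real om *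
        real (min (c + j) La + 1 - max 1 (c + j + 1 - om))))) = (\<Sum>j<om. 1 / (s2 * (1 + a / real om * real (min (c + j) om))))"
    proof (intro sum.cong refl)
      fix j assume "j \<in> {..<om}"
      hence "min (c + j) La + 1 - max 1 (c + j + 1 - om) = min (c + j) om" using nn_left[OF c _ La] by simp
      thus "1 / (s2 * (1 + se_kappa om La * se_snr P s2 / real om * real (min (c + j) La + 1 - max 1 (c + j + 1 - om))))
           = 1 / (s2 * (1 + a / real om * real (min (c + j) om)))" by (simp only: a_def)
    qed
    thus "P / real om * (\<Sum>j<om. 1 / (s2 * (1 + se_kappa om La * se_snr P s2 / real om *
        real (min (c + j) La + 1 - max 1 (c + j + 1 - om))))) > 2 * R" using goal by simp
  qed
  have right: "se_psi om La P s2 R (Suc 0) (La + 1 - c) = 0"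
    unfolding psi1_iff[OF om]
  proof -
    have "(\<Sum>j<om. 1 / (s2 * (1 + se_kappa om La * se_snr P s2 / real om *
        real (min (La + 1 - c + j) La + 1 - max 1 (La + 1 - c + j + 1 - om))))) = (\<Sum>j<om. 1 / (s2 * (1 + a / real om * real (min (c + (om - Suc j)) om))))"
    proof (intro sum.cong refl)
      fix j assume "j \<in> {..<om}"
      hence "min (La + 1 - c + j) La + 1 - max 1 (La + 1 - c + j + 1 - om) = min (c + (om - Suc j)) om" using nn_right[OF c _ La] by simp
      thus "1 / (s2 * (1 + se_kappa om La * se_snr P s2 / real om * real (min (La + 1 - c + j) La + 1 - max 1 (La + 1 - c + j + 1 - om))))
           = 1 / (s2 * (1 + a / real om * real (min (c + (om - Suc j)) om)))" by (simp only: a_def)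
    qed
    also have "\<dots> = (\<Sum>j<om. 1 / (s2 * (1 + a / real om * real (min (c + j) om))))"
      by (rule sum.nat_diff_reindex[where g = "\<lambda>j. 1 / (s2 * (1 + a / real om * real (min (c + j) om)))"])
    finally show "P / real om * (\<Sum>j<om. 1 / (s2 * (1 + se_kappa om La * se_snr P s2 / real om *
        real (min (La + 1 - c + j) La + 1 - max 1 (La + 1 - c + j + 1 - om))))) > 2 * R" using goal by simp
  qed
  show ?thesis using left right by simp
qed



theorem mainTheorem8:
  fixes om La :: nat and P s2 R :: real
  assumes om: "om \<ge> 1"
    and La: "La \<ge> 2 * om - 1"
    and P: "P > 0" and s2: "s2 > 0"
    and R0: "R > 0"
    and R1: "R < 1 / (2 * se_kappa om La) * ln (1 + se_kappa om La * se_snr P s2)"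
  shows
    "(real om > 1 / (1 / (exp (2 * R * se_kappa om La) - 1) - 1 / (se_kappa om La * se_snr P s2))
        \<longrightarrow> se_psi om La P s2 R 1 1 = 0 \<and> se_psi om La P s2 R 1 La = 0)
     \<and> (let X = real om * (1 + se_kappa om La * se_snr P s2) / (se_kappa om La * se_snr P s2)^2
                 * (ln (1 + se_kappa om La * se_snr P s2) - 2 * R * se_kappa om La)
        in \<forall>c::nat. 1 \<le> c \<and> c \<le> om - 1 \<and> real c < X \<longrightarrow>
              se_psi om La P s2 R 1 c = 0 \<and> se_psi om La P s2 R 1 (La + 1 - c) = 0)
     \<and> (\<forall>c0::nat. 1 \<le> c0 \<and> c0 \<le> om - 1 \<and>
           (\<forall>c\<in>{1..La}. (c \<le> c0 \<or> c \<ge> La + 1 - c0) \<longrightarrow> se_psi om La P s2 R 1 c = 0)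
         \<longrightarrow> (\<forall>t\<ge>1. \<forall>c\<in>{1..La}. min c (La + 1 - c) \<le> t * c0 \<longrightarrow> se_psi om La P s2 R t c = 0)
           \<and> (\<forall>t::nat. int t \<ge> \<lceil>real La / (2 * real c0)\<rceil> \<longrightarrow>
                 (\<forall>c\<in>{1..La}. se_psi om La P s2 R t c = 0)))"
proof -
  define k where "k = se_kappa om La"
  define a where "a = se_kappa om La * se_snr P s2"
  have La1: "La \<ge> 1" using om La by linarith
  have k: "k > 0" unfolding k_def se_kappa_def using La1 om by simp
  have a: "a > 0" unfolding a_def se_kappa_def se_snr_def using La1 om P s2 by simp
  have omr: "real om \<ge> 1" using om by simp
  have lnb: "2 * R * k < ln (1 + a)"
  proof -
    have "R * (2 * k) < 1 / (2 * k) * ln (1 + a) * (2 * k)"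
      using R1 k unfolding k_def a_def by (intro mult_strict_right_mono) auto
    thus ?thesis using k by simp
  qed
  define Hs where "Hs = (\<lambda>c::nat. (\<Sum>j<om. 1 / (1 + a * real (min (c + j) om) / om)))"
  have dec: "se_psi om La P s2 R 1 c = 0 \<and> se_psi om La P s2 R 1 (La + 1 - c) = 0"
    if "1 \<le> c" "c \<le> om" "a / om * Hs c > 2 * R * k" for c
    using decode[OF om La P s2 that(1,2), of R] that(3) unfolding Hs_def a_def k_def by simp
  have part1: "se_psi om La P s2 R 1 1 = 0 \<and> se_psi om La P s2 R 1 La = 0"
    if hyp: "real om > 1 / (1 / (exp (2 * R * k) - 1) - 1 / a)"
  proof -
    define E where "E = exp (2 * R * k) - 1"
    have E0: "E > 0" unfolding E_def using R0 k by simp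
    have Ea: "E < a"
    proof -
      have "exp (2 * R * k) < exp (ln (1 + a))" using lnb by simp
      thus ?thesis using a unfolding E_def by simp
    qed
    have D: "1 / E - 1 / a > 0" using E0 Ea a by (simp add: field_simps)
    have "real om * (1 / E - 1 / a) > 1"
      using hyp D unfolding E_def[symmetric] by (simp add: field_simps)
    hence "real om * (a - E) > a * E" using E0 a by (simp add: field_simps)
    hence ineq: "E * (real om + a) < a * real om" by (simp add: algebra_simps)
    define Q where "Q = (1 + a * (real om + 1) / om) / (1 + a * 1 / om)"
    have Qpos: "1 + a * 1 / om > 0" "1 + a * (real om + 1) / om > 0" using a omr by (simp_all add: add_pos_nonneg)
    have "exp (2 * R * k) < Q"
    proof -
      have "exp (2 * R * k) = 1 + E" unfolding E_def by simp
      moreover have "Q = (real om + a * real om + a) / (real om + a)"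
      proof -
        have n: "1 + a * (real om + 1) / om = (real om + a * real om + a) / om" using omr by (simp add: field_simps)
        have d: "1 + a * 1 / om = (real om + a) / om" using omr by (simp add: field_simps)
        show ?thesis unfolding Q_def n d using omr by simp
      qed
      moreover have "(1 + E) * (real om + a) < real om + a * real om + a" using ineq by (simp add: algebra_simps)
      ultimately have "(1 + E) * (real om + a) < Q * (real om + a)" using a omr by simp
      hence "1 + E < Q" by (rule mult_right_less_imp_less) (use a in simp)
      thus ?thesis using \<open>exp (2 * R * k) = 1 + E\<close> by simp
    qed
    hence "2 * R * k < ln Q"
      by (metis Qpos divide_pos_pos Q_def ln_exp ln_less_cancel_iff exp_gt_zero)
    also have "ln Q = ln (1 + a * (real om + 1) / om) - ln (1 + a * 1 / om)"
      unfolding Q_def using Qpos by (simp add: ln_div)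
    also have "\<dots> \<le> a / om * Hs 1"
    proof -
      have hb: "a / om * Hs 1 \<ge> ln (1 + a) - ln (1 + a * 1 / om) + (a * 1 / om) / (1 + a)"
        using Hbound[OF a om order.refl om] unfolding Hs_def by simp
      have kl: "ln (1 + a * (real om + 1) / om) - ln (1 + a * real om / om) \<le> a / om * (1 / (1 + a * real om / om))"
        using key_ln[of a "real om" "real om"] a omr by simp
      have "a * real om / om = a" using omr by simp
      thus ?thesis using hb kl by simp
    qed
    finally have "a / om * Hs 1 > 2 * R * k" .
    from dec[OF order.refl om this] show ?thesis by simp
  qed
  have part2: "se_psi om La P s2 R 1 c = 0 \<and> se_psi om La P s2 R 1 (La + 1 - c) = 0"
    if c: "1 \<le> c" "c \<le> om - 1" and cX: "real c < real om * (1 + a) / a^2 * (ln (1 + a) - 2 * R * k)" for c :: nat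
  proof -
    have com: "c \<le> om" using c by simp
    have hb: "a / om * Hs c \<ge> ln (1 + a) - ln (1 + a * c / om) + (a * c / om) / (1 + a)"
      using Hbound[OF a om c(1) com] unfolding Hs_def by simp
    have l: "ln (1 + a * c / om) \<le> a * c / om"
      using a omr by (intro ln_add_one_self_le_self) simp
    have "a * c / om - (a * c / om) / (1 + a) = a^2 * c / (om * (1 + a))"
    proof -
      have "1 + a \<noteq> 0" "real om \<noteq> 0" using a omr by auto
      have e1: "a * c / om - (a * c / om) / (1 + a) = (a * c / om) * a / (1 + a)"
      proof -
        have gen: "y - y / (1 + a) = y * a / (1 + a)" for y :: real
          using \<open>1 + a \<noteq> 0\<close> by (simp add: field_simps)
        show ?thesis by (rule gen)
      qed
      have e2: "(a * c / om) * a / (1 + a) = a^2 * c / (om * (1 + a))"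
        by (simp add: power2_eq_square)
      show ?thesis using e1 e2 by simp
    qed
    moreover have "a^2 * c / (om * (1 + a)) < ln (1 + a) - 2 * R * k"
    proof -
      define z where "z = real om * (1 + a) / a^2"
      have pos: "z > 0" using a omr by (simp add: z_def)
      have iz: "inverse z = a^2 / (real om * (1 + a))" by (simp add: z_def inverse_divide)
      have gen: "w \<noteq> 0 \<Longrightarrow> w * D * inverse w = D" for w D :: real by simp
      have "real c * inverse z < (z * (ln (1 + a) - 2 * R * k)) * inverse z"
        using cX pos unfolding z_def[symmetric] by (intro mult_strict_right_mono) auto
      also have "\<dots> = ln (1 + a) - 2 * R * k" using gen pos by simp
      also have "real c * inverse z = a^2 * c / (om * (1 + a))" unfolding iz by simp
      finally show ?thesis by simp
    qed
    ultimately have "a / om * Hs c > 2 * R * k" using hb l by linarith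
    thus ?thesis using dec[OF c(1) com] by simp
  qed
  have part3: "(\<forall>t\<ge>1. \<forall>c\<in>{1..La}. min c (La + 1 - c) \<le> t * c0 \<longrightarrow> se_psi om La P s2 R t c = 0)
           \<and> (\<forall>t::nat. int t \<ge> \<lceil>real La / (2 * real c0)\<rceil> \<longrightarrow>
                 (\<forall>c\<in>{1..La}. se_psi om La P s2 R t c = 0))"
    if c0: "1 \<le> c0" "c0 \<le> om - 1"
      and hyp: "\<forall>c\<in>{1..La}. (c \<le> c0 \<or> c \<ge> La + 1 - c0) \<longrightarrow> se_psi om La P s2 R 1 c = 0" for c0 :: nat
  proof -
    have A: "\<forall>t\<ge>1. \<forall>c\<in>{1..La}. min c (La + 1 - c) \<le> t * c0 \<longrightarrow> se_psi om La P s2 R t c = 0"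
    proof (intro allI impI)
      fix t :: nat assume "t \<ge> 1"
      then obtain n where "t = Suc n" by (cases t) auto
      thus "\<forall>c\<in>{1..La}. min c (La + 1 - c) \<le> t * c0 \<longrightarrow> se_psi om La P s2 R t c = 0"
        using part3[OF om La1 P s2 c0(1) hyp] by simp
    qed
    have B: "\<forall>c\<in>{1..La}. se_psi om La P s2 R t c = 0"
      if t: "int t \<ge> \<lceil>real La / (2 * real c0)\<rceil>" for t :: nat
    proof -
      have "real La / (2 * real c0) \<le> real t" using t by (simp add: ceiling_le_iff)
      hence "real La \<le> real t * (2 * real c0)" using c0 by (simp add: divide_le_eq)
      hence tt: "La \<le> 2 * t * c0" by (simp add: mult_ac) (metis of_nat_le_iff of_nat_mult of_nat_numeral mult.assoc)
      have La3: "La \<ge> 3" using c0 La by linarith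
      have t1: "t \<ge> 1" using tt La3 by (cases t) auto
      show ?thesis
      proof
        fix c assume cc: "c \<in> {1..La}"
        have "min c (La + 1 - c) \<le> t * c0" using tt cc by (simp add: min_def) arith
        thus "se_psi om La P s2 R t c = 0" using A t1 cc by blast
      qed
    qed
    show ?thesis using A B by blast
  qed
  show ?thesis
    using part1 part2 part3 unfolding k_def a_def Let_def by blast
qed

end
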